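(* For every $w\in F(\mathcal{B})$ there exists a unique reduced computation $w=w_0\to w_1\to\dots\to w_t$ with $w_t$ the empty word, and its length satisfies $t=\|w\|$.
   Context: Let $\mathcal{A}$ be a finite non-empty alphabet, $\mathcal{A}_1=\{a_1:a\in\mathcal{A}\}$ a disjoint copy of $\mathcal{A}$, and $\mathcal{B}=\{b_1,b_2\}$; let $F=F(\mathcal{A}_1\sqcup\mathcal{B})$ be the free group, whose elements are identified with reduced words, and $F(\mathcal{B})\le F$. Let $D=4|\mathcal{A}|(|\mathcal{A}|+2)$, fix a bijection $\eta:(\mathcal{A}\sqcup\mathcal{B})\times\mathcal{A}\to\{1,\dots,D/4\}$, and for $y\in\mathcal{A}\sqcup\mathcal{B}$, $a\in\mathcal{A}$, with $k=\eta(y,a)$, put $v(y,a)=b_1^k(b_2b_1)^{D-2k}b_2^k$. For $y\in\mathcal{A}\sqcup\mathcal{B}$ let $\psi_y$ be the automorphism of $F$ fixing $b_1,b_2$ and sending $a_1\mapsto v(y,a)a_1$ for each $a\in\mathcal{A}$; let $u_y=b_i^{-1}$ if $y=b_i$ and $u_y=a_1^{-1}$ if $y=a\in\mathcal{A}$. Rules: $w\cdot\theta_y=\psi_y(w)u_y$ and $w\cdot\theta_y^{-1}=\psi_y^{-1}(wu_y^{-1})$ (freely reduced). A computation is a sequence $w_0,\dots,w_t\in F$ with $w_i=w_{i-1}\cdot\theta_{y_i}^{\varepsilon_i}$, $y_i\in\mathcal{A}\sqcup\mathcal{B}$, $\varepsilon_i\in\{\pm1\}$; its length is $t$, its history is $\theta_{y_1}^{\varepsilon_1}\cdots\theta_{y_t}^{\varepsilon_t}$,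 and it is reduced if the history is a freely reduced word; two computations from the same $w_0$ are considered equal if they have the same history. $\|w\|$ is the length of the reduced word $w$. *)

theory Defs
  imports Main
begin

(* Generators of F: G a = a_1 (a in the alphabet 'a), B1 = b_1, B2 = b_2.
   The same datatype also serves as the index set A \<squnion> B for y. *)
datatype 'a gen = G 'a | B1 | B2

(* a letter of a word: (generator, inverted?) ; True = inverse letter *)
type_synonym 'a letter = "'a gen \<times> bool"
type_synonym 'a word = "'a letter list"

definition inv_letter :: "'a letter \<Rightarrow> 'a letter" where
  "inv_letter x = (fst x, \<not> snd x)"

definition reduced_word :: "'a word \<Rightarrow> bool" where
  "reduced_word w \<longleftrightarrow> (\<forall>i. Suc i < length w \<longrightarrow> w ! Suc i \<noteq> inv_letter (w ! i))"

fun freduce :: "'a word \<Rightarrow> 'a word" where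
  "freduce [] = []"
| "freduce (x # xs) = (case freduce xs of
        [] \<Rightarrow> [x]
      | y # ys \<Rightarrow> (if y = inv_letter x then ys else x # y # ys))"

definition fmult :: "'a word \<Rightarrow> 'a word \<Rightarrow> 'a word" where
  "fmult u v = freduce (u @ v)"

definition finv :: "'a word \<Rightarrow> 'a word" where
  "finv w = rev (map inv_letter w)"

definition in_FB :: "'a word \<Rightarrow> bool" where
  "in_FB w \<longleftrightarrow> reduced_word w \<and> (\<forall>x \<in> set w. fst x \<in> {B1, B2})"

definition D_const :: "'a::finite itself \<Rightarrow> nat" where
  "D_const (t::'a itself) = 4 * card (UNIV::'a set) * (card (UNIV::'a set) + 2)"

definition vword :: "('a::finite gen \<times> 'a \<Rightarrow> nat) \<Rightarrow> 'a gen \<Rightarrow> 'a \<Rightarrow> 'a word" where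
  "vword eta y a = (let k = eta (y, a); D = D_const TYPE('a) in
     replicate k (B1, False) @ concat (replicate (D - 2 * k) [(B2, False), (B1, False)])
     @ replicate k (B2, False))"

definition hom_letter :: "('a \<Rightarrow> 'a word) \<Rightarrow> 'a letter \<Rightarrow> 'a word" where
  "hom_letter img x = (case fst x of
       G a \<Rightarrow> (if snd x then finv (img a) else img a)
     | b \<Rightarrow> [x])"

definition hom_ext :: "('a \<Rightarrow> 'a word) \<Rightarrow> 'a word \<Rightarrow> 'a word" where
  "hom_ext img w = freduce (concat (map (hom_letter img) w))"

definition psi :: "('a::finite gen \<times> 'a \<Rightarrow> nat) \<Rightarrow> 'a gen \<Rightarrow> 'a word \<Rightarrow> 'a word" where
  "psi eta y = hom_ext (\<lambda>a. vword eta y a @ [(G a, False)])"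

definition psi_inv :: "('a::finite gen \<times> 'a \<Rightarrow> nat) \<Rightarrow> 'a gen \<Rightarrow> 'a word \<Rightarrow> 'a word" where
  "psi_inv eta y = hom_ext (\<lambda>a. finv (vword eta y a) @ [(G a, False)])"

definition u_word :: "'a gen \<Rightarrow> 'a word" where
  "u_word y = [(y, True)]"

(* one rule application; eps = True means theta_y, False means theta_y^{-1} *)
definition apply_rule :: "('a::finite gen \<times> 'a \<Rightarrow> nat) \<Rightarrow> 'a word \<Rightarrow> 'a gen \<times> bool \<Rightarrow> 'a word" where
  "apply_rule eta w r = (case r of (y, eps) \<Rightarrow>
      (if eps then fmult (psi eta y w) (u_word y)
       else psi_inv eta y (fmult w (finv (u_word y)))))"

definition run :: "('a::finite gen \<times> 'a \<Rightarrow> nat) \<Rightarrow> 'a word \<Rightarrow> ('a gen \<times> bool) list \<Rightarrow> 'a word" where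
  "run eta w h = foldl (apply_rule eta) w h"

definition reduced_history :: "('a gen \<times> bool) list \<Rightarrow> bool" where
  "reduced_history h \<longleftrightarrow> (\<forall>i. Suc i < length h \<longrightarrow>
       \<not> (fst (h ! Suc i) = fst (h ! i) \<and> snd (h ! Suc i) \<noteq> snd (h ! i)))"

end

theory Submission
  imports Defs
begin



fun rd :: "'a word \<Rightarrow> bool" where
  "rd [] = True"
| "rd [x] = True"
| "rd (x # y # xs) = (y \<noteq> inv_letter x \<and> rd (y # xs))"

lemma inv_inv[simp]: "inv_letter (inv_letter x) = x"
  by (simp add: inv_letter_def)
lemma inv_neq[simp]: "inv_letter x \<noteq> x" "x \<noteq> inv_letter x"
  by (auto simp: inv_letter_def prod_eq_iff)
lemma inv_eq_iff: "inv_letter x = y \<longleftrightarrow> x = inv_letter y" by auto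
lemma inv_letter_simp[simp]: "inv_letter (g, e) = (g, \<not> e)" by (simp add: inv_letter_def)

lemma rd_Cons: "rd (x # xs) \<longleftrightarrow> rd xs \<and> (xs = [] \<or> hd xs \<noteq> inv_letter x)"
  by (cases xs) auto

lemma all_nat_split: "(\<forall>i::nat. Q i) = (Q 0 \<and> (\<forall>j. Q (Suc j)))"
  by (metis not0_implies_Suc)

lemma reduced_word_Cons:
  "reduced_word (x # xs) \<longleftrightarrow> reduced_word xs \<and> (xs = [] \<or> hd xs \<noteq> inv_letter x)"
  unfolding reduced_word_def
  apply (subst all_nat_split)
  apply (cases xs) apply auto
  done

lemma reduced_word_rd: "reduced_word w = rd w"
proof (induction w)
  case Nil then show ?case by (simp add: reduced_word_def)
next
  case (Cons x w) then show ?case by (simp add: reduced_word_Cons rd_Cons)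
qed

lemma reduced_history_rd: "reduced_history h = rd h"
proof -
  have "reduced_history h = reduced_word h"
    unfolding reduced_history_def reduced_word_def inv_letter_def
    by (auto simp: prod_eq_iff)
  then show ?thesis by (simp add: reduced_word_rd)
qed

lemma rd_append:
  "rd (xs @ ys) \<longleftrightarrow> rd xs \<and> rd ys \<and> (xs = [] \<or> ys = [] \<or> hd ys \<noteq> inv_letter (last xs))"
  by (induction xs) (auto simp: rd_Cons)

lemma freduce_rd: "rd (freduce xs)"
proof (induction xs)
  case Nil then show ?case by simp
next
  case (Cons x xs) then show ?case
    by (auto split: list.split simp: rd_Cons)
qed

lemma freduce_id: "rd xs \<Longrightarrow> freduce xs = xs"
  by (induction xs) (auto simp: rd_Cons split: list.split)

lemma freduce_freduce[simp]: "freduce (freduce xs) = freduce xs"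
  by (simp add: freduce_id freduce_rd)

lemma freduce_cancel2: "freduce (x # inv_letter x # ws) = freduce ws"
proof -
  have "rd (freduce ws)" by (rule freduce_rd)
  then show ?thesis
    by (auto split: list.split simp: rd_Cons freduce_id)
qed

lemma freduce_append_right: "freduce (xs @ ys) = freduce (xs @ freduce ys)"
  by (induction xs) auto

lemma freduce_append_left: "freduce (freduce xs @ ys) = freduce (xs @ ys)"
proof (induction xs)
  case Nil then show ?case by simp
next
  case (Cons x xs)
  have "freduce ((x # xs) @ ys) = freduce (x # (freduce xs @ ys))"
    using Cons by simp
  also have "\<dots> = freduce (freduce (x # xs) @ ys)"
  proof (cases "freduce xs")
    case Nil then show ?thesis by simp
  next
    case (Cons y zs)
    show ?thesis
    proof (cases "y = inv_letter x")
      case True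
      have e: "freduce (x # xs) = zs" using Cons True by simp
      show ?thesis using Cons True freduce_cancel2[of x "zs @ ys"] e
        by (metis append_Cons)
    next
      case False
      then show ?thesis using Cons by simp
    qed
  qed
  finally show ?case by simp
qed

lemma freduce_mid: "freduce (xs @ freduce ys @ zs) = freduce (xs @ ys @ zs)"
  by (metis freduce_append_left freduce_append_right)

lemma finv_Nil[simp]: "finv [] = []" by (simp add: finv_def)
lemma finv_Cons[simp]: "finv (x # xs) = finv xs @ [inv_letter x]" by (simp add: finv_def)
lemma finv_append[simp]: "finv (xs @ ys) = finv ys @ finv xs" by (simp add: finv_def)
lemma finv_finv[simp]: "finv (finv xs) = xs" by (simp add: finv_def rev_map comp_def)
lemma length_finv[simp]: "length (finv xs) = length xs" by (simp add: finv_def)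
lemma set_finv: "set (finv xs) = inv_letter ` set xs" by (simp add: finv_def)

lemma freduce_cancel_gen: "freduce (C @ finv C @ ys) = freduce ys"
proof (induction C arbitrary: ys)
  case Nil then show ?case by simp
next
  case (Cons c C)
  have "freduce ((c # C) @ finv (c # C) @ ys) = freduce (c # (C @ finv C @ (inv_letter c # ys)))"
    by simp
  also have "\<dots> = freduce (c # freduce (C @ finv C @ (inv_letter c # ys)))"
    by (metis append_Cons append_Nil freduce_append_right)
  also have "\<dots> = freduce (c # freduce (inv_letter c # ys))" using Cons by simp
  also have "\<dots> = freduce (c # inv_letter c # ys)"
    by (metis append_Cons append_Nil freduce_append_right)
  also have "\<dots> = freduce ys" by (rule freduce_cancel2)
  finally show ?case .
qed

lemma freduce_cancel_mid: "freduce (xs @ C @ finv C @ ys) = freduce (xs @ ys)"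
  by (metis freduce_append_right freduce_cancel_gen)

lemma freduce_cancel_mid': "freduce (xs @ finv C @ C @ ys) = freduce (xs @ ys)"
  using freduce_cancel_mid[of xs "finv C" ys] by simp

lemma rd_finv: "rd (finv xs) = rd xs"
proof (induction xs)
  case Nil then show ?case by simp
next
  case (Cons x xs)
  have l: "xs \<noteq> [] \<Longrightarrow> last (finv xs) = inv_letter (hd xs)"
    by (cases xs) auto
  show ?case
  proof (cases "xs = []")
    case True then show ?thesis by simp
  next
    case False
    then have "finv xs \<noteq> []" by (cases xs) auto
    then show ?thesis using Cons l False by (auto simp: rd_append rd_Cons inv_eq_iff)
  qed
qed

lemma set_freduce: "set (freduce xs) \<subseteq> set xs"
  by (induction xs) (auto split: list.split)

definition GF :: "'a word \<Rightarrow> bool" where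
  "GF w \<longleftrightarrow> (\<forall>x\<in>set w. fst x = B1 \<or> fst x = B2)"

lemma GF_simps[simp]: "GF []" "GF (x # xs) \<longleftrightarrow> (fst x = B1 \<or> fst x = B2) \<and> GF xs"
  "GF (xs @ ys) \<longleftrightarrow> GF xs \<and> GF ys"
  by (auto simp: GF_def)

lemma GF_freduce: "GF xs \<Longrightarrow> GF (freduce xs)"
  using set_freduce unfolding GF_def by blast

lemma GF_finv: "GF (finv xs) = GF xs"
  by (auto simp: GF_def set_finv inv_letter_def)

lemma freduce_eq_Nil: "freduce (finv V @ s @ V) = [] \<Longrightarrow> freduce s = []"
proof -
  assume h: "freduce (finv V @ s @ V) = []"
  have "freduce s = freduce (V @ finv V @ s @ V @ finv V)"
    using freduce_cancel_mid[of "[]" V "s @ V @ finv V"] freduce_cancel_mid[of s V "[]"]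
    by simp
  also have "\<dots> = freduce (V @ freduce (finv V @ s @ V) @ finv V)"
    by (metis append_assoc freduce_mid)
  also have "\<dots> = []" using h freduce_cancel_mid[of "[]" V "[]"] by simp
  finally show ?thesis .
qed




lemma hom_ext_append: "hom_ext img (xs @ ys) = freduce (hom_ext img xs @ hom_ext img ys)"
  unfolding hom_ext_def by (simp add: freduce_append_left freduce_append_right[symmetric])

lemma hom_letter_B: "fst x = B1 \<or> fst x = B2 \<Longrightarrow> hom_letter img x = [x]"
  by (auto simp: hom_letter_def)

lemma concat_hom_B: "GF w \<Longrightarrow> concat (map (hom_letter img) w) = w"
  by (induction w) (auto simp: hom_letter_B)

lemma hom_ext_B: "GF w \<Longrightarrow> hom_ext img w = freduce w"
  by (simp add: hom_ext_def concat_hom_B)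

lemma hom_letter_G: "hom_letter img (G a, e) = (if e then finv (img a) else img a)"
  by (simp add: hom_letter_def)

lemma decomp_last_G:
  "GF w \<or> (\<exists>z1 c f s. w = z1 @ [(G c, f)] @ s \<and> GF s)"
proof (induction w rule: rev_induct)
  case Nil then show ?case by simp
next
  case (snoc x w)
  obtain g e where x: "x = (g, e)" by fastforce
  show ?case
  proof (cases g)
    case (G c)
    then show ?thesis using x by (intro disjI2) (rule exI[of _ w], auto)
  next
    case B1
    from snoc show ?thesis
    proof
      assume "GF w" then show ?thesis using x B1 by simp
    next
      assume "\<exists>z1 c f s. w = z1 @ [(G c, f)] @ s \<and> GF s"
      then obtain z1 c f s where "w = z1 @ [(G c, f)] @ s" "GF s" by blast
      then show ?thesis using x B1 by (intro disjI2) (rule exI[of _ z1], rule exI[of _ c], rule exI[of _ f], rule exI[of _ "s @ [x]"], simp)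
    qed
  next
    case B2
    from snoc show ?thesis
    proof
      assume "GF w" then show ?thesis using x B2 by simp
    next
      assume "\<exists>z1 c f s. w = z1 @ [(G c, f)] @ s \<and> GF s"
      then obtain z1 c f s where "w = z1 @ [(G c, f)] @ s" "GF s" by blast
      then show ?thesis using x B2 by (intro disjI2) (rule exI[of _ z1], rule exI[of _ c], rule exI[of _ f], rule exI[of _ "s @ [x]"], simp)
    qed
  qed
qed

lemma rd_G_block:
  assumes "rd (Q @ [(G a, e)])" "GF M" "rd M"
  shows "rd (Q @ (G a, e) # M)"
proof -
  have "M \<noteq> [] \<Longrightarrow> fst (hd M) = B1 \<or> fst (hd M) = B2" using assms(2) by (cases M) auto
  then have "M = [] \<or> hd M \<noteq> inv_letter (G a, e)" by auto
  then show ?thesis using assms rd_append[of "Q @ [(G a, e)]" M] by simp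
qed

lemma snoc_G:
  assumes "rd (P @ M)" "GF M" "M \<noteq> []"
  shows "rd (P @ M @ [(G a, e)])"
proof -
  have "fst (last M) = B1 \<or> fst (last M) = B2" using assms(2,3) by (auto simp: GF_def)
  then have "(G a, e) \<noteq> inv_letter (last (P @ M))" using assms(3) by (auto simp: inv_letter_def)
  then show ?thesis using assms(1) rd_append[of "P @ M" "[(G a, e)]"] by simp
qed

lemma snoc_GG:
  assumes "rd (P @ [(G c, f)])" "(c, f) \<noteq> (a, \<not> e)"
  shows "rd (P @ [(G c, f)] @ [(G a, e)])"
  using assms rd_append[of "P @ [(G c, f)]" "[(G a, e)]"] by auto

locale homloc =
  fixes img :: "'a \<Rightarrow> 'a word" and V :: "'a \<Rightarrow> 'a word"
  assumes img: "\<And>a. img a = V a @ [(G a, False)]"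
    and VB: "\<And>a. GF (V a)" and Vr: "\<And>a. rd (V a)"
begin

definition T :: "'a \<Rightarrow> bool \<Rightarrow> 'a word" where
  "T a e = (if e then finv (V a) else [])"

lemma T_GF: "GF (T a e)" by (simp add: T_def GF_finv VB)
lemma T_rd: "rd (T a e)" by (simp add: T_def rd_finv Vr)

lemma step_s:
  assumes h: "hom_ext img (z0 @ [(G a, e)]) = Q @ [(G a, e)] @ T a e"
    and r: "rd (Q @ [(G a, e)])" and s: "GF s" "rd s"
  shows "hom_ext img (z0 @ [(G a, e)] @ s) = Q @ [(G a, e)] @ freduce (T a e @ s)"
proof -
  have "hom_ext img (z0 @ [(G a, e)] @ s) = freduce (hom_ext img (z0 @ [(G a, e)]) @ hom_ext img s)"
    using hom_ext_append[of img "z0 @ [(G a, e)]" s] by simp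
  also have "\<dots> = freduce (Q @ [(G a, e)] @ T a e @ freduce s)" using h s by (simp add: hom_ext_B)
  also have "\<dots> = freduce (Q @ [(G a, e)] @ freduce (T a e @ s))"
    by (metis append_assoc freduce_append_right)
  also have "\<dots> = Q @ [(G a, e)] @ freduce (T a e @ s)"
    apply (rule freduce_id)
    using rd_G_block[OF r GF_freduce[of "T a e @ s"] freduce_rd] s T_GF by simp
  finally show ?thesis .
qed

lemma homG:
  "rd (z0 @ [(G a, e)]) \<Longrightarrow> \<exists>Q. hom_ext img (z0 @ [(G a, e)]) = Q @ [(G a, e)] @ T a e \<and> rd (Q @ [(G a, e)])"
proof (induction "length z0" arbitrary: z0 a e rule: less_induct)
  case less
  have hl: "hom_ext img (z0 @ [(G a, e)]) = freduce (hom_ext img z0 @ hom_letter img (G a, e))"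
    unfolding hom_ext_def by (simp add: freduce_append_left)
  have hlG: "hom_letter img (G a, e) = (if e then (G a, True) # finv (V a) else V a @ [(G a, False)])"
    by (simp add: hom_letter_G img)
  from decomp_last_G[of z0] show ?case
  proof
    assume gf: "GF z0"
    have z0r: "rd z0" using less.prems rd_append by blast
    have hz: "hom_ext img z0 = z0" using gf z0r by (simp add: hom_ext_B freduce_id)
    show ?thesis
    proof (cases e)
      case True
      have "rd (z0 @ [(G a, e)] @ finv (V a))"
        using rd_G_block[OF less.prems, of "finv (V a)"] by (simp add: GF_finv VB rd_finv Vr)
      then have "hom_ext img (z0 @ [(G a, e)]) = z0 @ [(G a, e)] @ T a e"
        using hl hz hlG True by (simp add: freduce_id T_def)
      then show ?thesis using less.prems by blast
    next
      case False
      have gq: "GF (freduce (z0 @ V a))" by (intro GF_freduce) (simp add: gf VB)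
      have "hom_ext img (z0 @ [(G a, e)]) = freduce (freduce (z0 @ V a) @ [(G a, False)])"
        using hl hz hlG False by (simp add: freduce_append_left)
      moreover have "rd (freduce (z0 @ V a) @ [(G a, False)])"
        using rd_append[of "freduce (z0 @ V a)" "[(G a, False)]"] freduce_rd[of "z0 @ V a"] gq
        by (cases "freduce (z0 @ V a)" rule: rev_cases) (auto simp: GF_def)
      ultimately show ?thesis using False by (intro exI[of _ "freduce (z0 @ V a)"]) (simp add: freduce_id T_def)
    qed
  next
    assume "\<exists>z1 c f s. z0 = z1 @ [(G c, f)] @ s \<and> GF s"
    then obtain z1 c f s where z0: "z0 = z1 @ [(G c, f)] @ s" and gs: "GF s" by blast
    have rz: "rd (z1 @ [(G c, f)] @ s @ [(G a, e)])" using less.prems z0 by simp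
    have r1: "rd (z1 @ [(G c, f)])" using rz rd_append[of "z1 @ [(G c, f)]" "s @ [(G a, e)]"] by simp
    have rs: "rd s" using rz rd_append[of "z1 @ [(G c, f)] @ s" "[(G a, e)]"]
        rd_append[of "z1 @ [(G c, f)]" s] by simp
    from less.hyps[of "z1" c f] r1 z0 obtain Q1 where
      Q1: "hom_ext img (z1 @ [(G c, f)]) = Q1 @ [(G c, f)] @ T c f" "rd (Q1 @ [(G c, f)])" by auto
    define M where "M = freduce (T c f @ s)"
    have hz0: "hom_ext img z0 = Q1 @ [(G c, f)] @ M"
      using step_s[OF Q1 gs rs] z0 M_def by simp
    have GM: "GF M" unfolding M_def by (intro GF_freduce) (simp add: T_GF gs)
    have rM: "rd M" using M_def freduce_rd by simp
    have rQM: "rd (Q1 @ [(G c, f)] @ M)" using rd_G_block[OF Q1(2) GM rM] by simp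
    show ?thesis
    proof (cases e)
      case True
      have "M = [] \<Longrightarrow> (c, f) \<noteq> (a, False)"
      proof
        assume "M = []" "(c, f) = (a, False)"
        then have "s = []" using M_def freduce_id[OF rs] by (simp add: T_def)
        then show False using rz \<open>(c, f) = (a, False)\<close> True rd_append[of "z1 @ [(G c, f)]" "[(G a, e)]"] by simp
      qed
      then have "rd ((Q1 @ [(G c, f)] @ M) @ [(G a, e)])"
        using snoc_G[of "Q1 @ [(G c, f)]" M a e] snoc_GG[OF Q1(2), of a e] rQM True GM
        by (cases "M = []") auto
      then have r2: "rd ((Q1 @ [(G c, f)] @ M) @ (G a, e) # finv (V a))"
        using rd_G_block[of "Q1 @ [(G c, f)] @ M" a e "finv (V a)"] by (simp add: GF_finv VB rd_finv Vr)
      have "hom_ext img (z0 @ [(G a, e)]) = freduce (Q1 @ [(G c, f)] @ M @ (G a, True) # finv (V a))"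
        using hl hz0 hlG True by simp
      also have "\<dots> = Q1 @ [(G c, f)] @ M @ (G a, True) # finv (V a)"
        using r2 True by (simp add: freduce_id)
      finally show ?thesis using True r2 rd_append[of "(Q1 @ [(G c, f)] @ M) @ [(G a, e)]" "finv (V a)"]
        by (intro exI[of _ "Q1 @ [(G c, f)] @ M"]) (simp add: T_def)
    next
      case False
      define M' where "M' = freduce (M @ V a)"
      have GM': "GF M'" unfolding M'_def by (intro GF_freduce) (simp add: GM VB)
      have "M' = [] \<Longrightarrow> (c, f) \<noteq> (a, True)"
      proof
        assume "M' = []" "(c, f) = (a, True)"
        then have "freduce (finv (V a) @ s @ V a) = []" using M'_def M_def
          by (simp add: T_def freduce_append_left)
        then have "freduce s = []" by (rule freduce_eq_Nil)
        then have "s = []" using freduce_id[OF rs] by simp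
        then show False using rz \<open>(c, f) = (a, True)\<close> False rd_append[of "z1 @ [(G c, f)]" "[(G a, e)]"] by simp
      qed
      then have r2: "rd ((Q1 @ [(G c, f)] @ M') @ [(G a, e)])"
        using snoc_G[of "Q1 @ [(G c, f)]" M' a e] snoc_GG[OF Q1(2), of a e] rd_G_block[OF Q1(2) GM'] False GM' M'_def freduce_rd
        by (cases "M' = []") auto
      have "hom_ext img (z0 @ [(G a, e)]) = freduce (Q1 @ [(G c, f)] @ M @ V a @ [(G a, False)])"
        using hl hz0 hlG False by simp
      also have "\<dots> = freduce (Q1 @ [(G c, f)] @ M' @ [(G a, False)])"
        using freduce_mid[of "Q1 @ [(G c, f)]" "M @ V a" "[(G a, False)]"] M'_def by simp
      also have "\<dots> = Q1 @ [(G c, f)] @ M' @ [(G a, False)]"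
        using r2 False by (simp add: freduce_id)
      finally show ?thesis using False r2
        by (intro exI[of _ "Q1 @ [(G c, f)] @ M'"]) (simp add: T_def)
    qed
  qed
qed

lemma homB:
  assumes "rd (z0 @ [(G a, e)] @ s)" "GF s"
  shows "\<exists>Q. hom_ext img (z0 @ [(G a, e)] @ s) = Q @ [(G a, e)] @ freduce (T a e @ s) \<and> rd (Q @ [(G a, e)])"
proof -
  have r1: "rd (z0 @ [(G a, e)])" using assms(1) rd_append[of "z0 @ [(G a, e)]" s] by simp
  have rs: "rd s" using assms(1) rd_append[of "z0 @ [(G a, e)]" s] by simp
  from homG[OF r1] obtain Q where Q: "hom_ext img (z0 @ [(G a, e)]) = Q @ [(G a, e)] @ T a e" "rd (Q @ [(G a, e)])" by blast
  show ?thesis using step_s[OF Q assms(2) rs] Q(2) by blast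
qed

end




lemma finv_rep: "finv (replicate n x) = replicate n (inv_letter x)"
  by (simp add: finv_def)

lemma rep_Suc_snoc: "replicate (Suc n) x = replicate n x @ [x]"
  by (simp add: replicate_append_same)

lemma concat_rep_snoc: "concat (replicate (Suc n) L) = concat (replicate n L) @ L"
  by (simp only: rep_Suc_snoc concat_append) simp

lemma finv_concat_rep: "finv (concat (replicate m [p, q])) = concat (replicate m [inv_letter q, inv_letter p])"
proof (induction m)
  case 0 then show ?case by simp
next
  case (Suc m)
  have "finv (concat (replicate (Suc m) [p, q])) = finv (concat (replicate m [p, q]) @ [p, q])"
    by (simp only: concat_rep_snoc)
  also have "\<dots> = [inv_letter q, inv_letter p] @ concat (replicate m [inv_letter q, inv_letter p])"
    using Suc by simp
  finally show ?case by simp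
qed

lemma rd_sign: "(\<forall>x\<in>set w. snd x = c) \<Longrightarrow> rd w"
  by (induction w rule: rd.induct) (auto simp: inv_letter_def)

lemma rd_join: "rd (A @ [x]) \<Longrightarrow> rd R \<Longrightarrow> (R \<noteq> [] \<Longrightarrow> hd R \<noteq> inv_letter x) \<Longrightarrow> rd (A @ x # R)"
  using rd_append[of "A @ [x]" "R"] by auto


lemma rd_suffix: "rd (A @ R) \<Longrightarrow> rd R"
  using rd_append by blast

definition W :: "nat \<Rightarrow> nat \<Rightarrow> 'a word" where
  "W k m = replicate k (B1, False) @ concat (replicate m [(B2, False), (B1, False)]) @ replicate k (B2, False)"
definition Wi :: "nat \<Rightarrow> nat \<Rightarrow> 'a word" where
  "Wi k m = replicate k (B2, True) @ concat (replicate m [(B1, True), (B2, True)]) @ replicate k (B1, True)"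
definition PT :: "nat \<Rightarrow> 'a word" where "PT k = replicate k (B1, False) @ [(B2, False)]"
definition PF :: "nat \<Rightarrow> 'a word" where "PF k = replicate k (B2, True) @ [(B1, True)]"

lemma finv_W: "finv (W k m) = Wi k m"
  by (simp add: W_def Wi_def finv_rep finv_concat_rep)

lemma set_concat_rep: "set (concat (replicate m L)) \<subseteq> set L"
  by (induction m) auto

lemma rd_W: "rd (W k m)"
  apply (rule rd_sign[of _ False])
  using set_concat_rep[of m "[(B2, False), (B1, False)]"] by (auto simp: W_def)

lemma GF_W: "GF (W k m)"
  using set_concat_rep[of m "[(B2, False), (B1, False)]"] by (auto simp: W_def GF_def)

lemma rd_pos_snoc: "rd (replicate k (B1, False) @ concat (replicate m [(B2, False), (B1, False)]) @ replicate j (B2, False))"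
  apply (rule rd_sign[of _ False])
  using set_concat_rep[of m "[(B2, False), (B1, False)]"] by auto

lemma rd_neg_snoc: "rd (replicate k (B2, True) @ concat (replicate m [(B1, True), (B2, True)]) @ replicate j (B1, True))"
  apply (rule rd_sign[of _ True])
  using set_concat_rep[of m "[(B1, True), (B2, True)]"] by auto

lemma rep_split: "j \<le> k \<Longrightarrow> replicate k x = replicate (k - j) x @ replicate j x"
  using replicate_add[of "k - j" j x] by simp

lemma JL_TT:
  assumes "k \<ge> 1" "k' \<ge> 1" "m \<ge> 1" "rd (PT k' @ Z)"
  shows "\<exists>Z'. freduce (W k m @ PT k' @ Z) = PT k @ Z'"
proof -
  obtain m0 where m: "m = Suc m0" using assms(3) by (cases m) auto
  obtain k0 where k: "k = Suc k0" using assms(1) by (cases k) auto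
  obtain k1 where k': "k' = Suc k1" using assms(2) by (cases k') auto
  define A :: "'a word" where "A = replicate k (B1, False) @ concat (replicate m [(B2, False), (B1, False)]) @ replicate k0 (B2, False)"
  have WA: "W k m = A @ [(B2, False)]" by (simp add: W_def A_def k del: replicate_Suc add: rep_Suc_snoc)
  have r1: "rd (A @ [(B2, False)])" using rd_W[of k m] WA by metis
  have h: "hd (PT k' @ Z) = (B1, False)" by (simp add: PT_def k')
  have "rd (A @ (B2, False) # PT k' @ Z)"
    using rd_join[OF r1 assms(4)] h by simp
  then have "freduce (W k m @ PT k' @ Z) = W k m @ PT k' @ Z" using WA by (simp add: freduce_id)
  moreover have "W k m = PT k @ (B1, False) # concat (replicate m0 [(B2, False), (B1, False)]) @ replicate k (B2, False)"
    by (simp add: W_def PT_def m)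
  ultimately have "freduce (W k m @ PT k' @ Z) = PT k @ ((B1, False) # concat (replicate m0 [(B2, False), (B1, False)]) @ replicate k (B2, False) @ PT k' @ Z)"
    by simp
  then show ?thesis by blast
qed

lemma JL_FF:
  assumes "k \<ge> 1" "k' \<ge> 1" "m \<ge> 1" "rd (PF k' @ Z)"
  shows "\<exists>Z'. freduce (Wi k m @ PF k' @ Z) = PF k @ Z'"
proof -
  obtain m0 where m: "m = Suc m0" using assms(3) by (cases m) auto
  obtain k0 where k: "k = Suc k0" using assms(1) by (cases k) auto
  obtain k1 where k': "k' = Suc k1" using assms(2) by (cases k') auto
  define A :: "'a word" where "A = replicate k (B2, True) @ concat (replicate m [(B1, True), (B2, True)]) @ replicate k0 (B1, True)"
  have WA: "Wi k m = A @ [(B1, True)]" by (simp add: Wi_def A_def k del: replicate_Suc add: rep_Suc_snoc)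
  have r1: "rd (A @ [(B1, True)])" using rd_W[of k m] finv_W[of k m] rd_finv WA by metis
  have h: "hd (PF k' @ Z) = (B2, True)" by (simp add: PF_def k')
  have "rd (A @ (B1, True) # PF k' @ Z)"
    using rd_join[OF r1 assms(4)] h by simp
  then have "freduce (Wi k m @ PF k' @ Z) = Wi k m @ PF k' @ Z" using WA by (simp add: freduce_id)
  moreover have "Wi k m = PF k @ (B2, True) # concat (replicate m0 [(B1, True), (B2, True)]) @ replicate k (B1, True)"
    by (simp add: Wi_def PF_def m)
  ultimately have "freduce (Wi k m @ PF k' @ Z) = PF k @ ((B2, True) # concat (replicate m0 [(B1, True), (B2, True)]) @ replicate k (B1, True) @ PF k' @ Z)"
    by simp
  then show ?thesis by blast
qed


lemma rep3: "replicate (j + 1 + k') x = replicate j x @ [x] @ replicate k' x"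
  by (simp add: replicate_add replicate_append_same)

lemma rep3': "replicate (Suc (j + k')) x = replicate j x @ x # replicate k' x"
  using rep3[of j k' x] by simp

lemma concat_rep_shift: "concat (replicate n [a, b]) @ [a] = a # concat (replicate n [b, a])"
  by (induction n) auto

lemma cancel_join:
  assumes "rd (A @ [x])" "rd R" "R \<noteq> [] \<Longrightarrow> hd R \<noteq> inv_letter x"
  shows "freduce (A @ [x] @ C @ finv C @ R) = A @ x # R"
proof -
  have "freduce (A @ [x] @ C @ finv C @ R) = freduce ((A @ [x]) @ R)"
    using freduce_cancel_mid[of "A @ [x]" C R] by simp
  also have "\<dots> = A @ x # R" using rd_join[OF assms] by (simp add: freduce_id)
  finally show ?thesis .
qed

lemma JL_TF:
  assumes "k \<ge> 1" "k' \<ge> 1" "m \<ge> 1" "k \<noteq> k'" "rd (PF k' @ Z)"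
  shows "\<exists>Z'. freduce (W k m @ PF k' @ Z) = PT k @ Z'"
proof -
  obtain m0 where m: "m = Suc m0" using assms(3) by (cases m) auto
  show ?thesis
  proof (cases "k' < k")
    case True
    define j where "j = k - k' - 1"
    have kj: "k = j + 1 + k'" using True j_def by simp
    define A :: "'a word" where "A = replicate k (B1, False) @ concat (replicate m [(B2, False), (B1, False)]) @ replicate j (B2, False)"
    have eq: "W k m @ PF k' @ Z = A @ [(B2, False)] @ replicate k' (B2, False) @ finv (replicate k' (B2, False)) @ ((B1, True) # Z)"
      unfolding W_def A_def PF_def finv_rep by (simp add: kj rep3' del: replicate_Suc)
    have r1: "rd (A @ [(B2, False)])" unfolding A_def using rd_pos_snoc[of k m "Suc j"]
      by (simp add: rep_Suc_snoc del: replicate_Suc)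
    have r2: "rd ((B1, True) # Z)" using assms(5) rd_suffix[of "replicate k' (B2, True)"] by (simp add: PF_def)
    have "freduce (W k m @ PF k' @ Z) = A @ (B2, False) # (B1, True) # Z"
      unfolding eq by (rule cancel_join[OF r1 r2]) simp
    moreover have "A = PT k @ (B1, False) # concat (replicate m0 [(B2, False), (B1, False)]) @ replicate j (B2, False)"
      by (simp add: A_def PT_def m)
    ultimately have "freduce (W k m @ PF k' @ Z) = PT k @ ((B1, False) # concat (replicate m0 [(B2, False), (B1, False)]) @ replicate j (B2, False) @ (B2, False) # (B1, True) # Z)"
      by simp
    then show ?thesis by blast
  next
    case False
    then have lt: "k < k'" using assms(4) by simp
    define j where "j = k' - k"
    have kj: "k' = k + j" using lt j_def by simp
    define X :: "'a word" where "X = replicate k (B1, False) @ concat (replicate m0 [(B2, False), (B1, False)]) @ [(B2, False)]"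
    have eq: "W k m @ PF k' @ Z = X @ [(B1, False)] @ replicate k (B2, False) @ finv (replicate k (B2, False)) @ (replicate j (B2, True) @ (B1, True) # Z)"
      unfolding W_def X_def PF_def finv_rep by (simp add: kj m concat_rep_snoc replicate_add del: replicate_Suc)
    have r1: "rd (X @ [(B1, False)])" unfolding X_def using rd_pos_snoc[of k m 0]
      by (simp add: m concat_rep_snoc del: replicate_Suc)
    have r2: "rd (replicate j (B2, True) @ (B1, True) # Z)" using assms(5) rd_suffix[of "replicate k (B2, True)"]
      by (simp add: PF_def kj replicate_add)
    have j0: "j \<noteq> 0" using kj lt by simp
    have "freduce (W k m @ PF k' @ Z) = X @ (B1, False) # replicate j (B2, True) @ (B1, True) # Z"
      unfolding eq by (rule cancel_join[OF r1 r2]) (use j0 in \<open>cases j; auto\<close>)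
    moreover have "X = PT k @ concat (replicate m0 [(B1, False), (B2, False)])"
      by (simp add: X_def PT_def concat_rep_shift)
    ultimately have "freduce (W k m @ PF k' @ Z) = PT k @ (concat (replicate m0 [(B1, False), (B2, False)]) @ (B1, False) # replicate j (B2, True) @ (B1, True) # Z)"
      by simp
    then show ?thesis by blast
  qed
qed

lemma JL_FT:
  assumes "k \<ge> 1" "k' \<ge> 1" "m \<ge> 1" "k \<noteq> k'" "rd (PT k' @ Z)"
  shows "\<exists>Z'. freduce (Wi k m @ PT k' @ Z) = PF k @ Z'"
proof -
  obtain m0 where m: "m = Suc m0" using assms(3) by (cases m) auto
  show ?thesis
  proof (cases "k' < k")
    case True
    define j where "j = k - k' - 1"
    have kj: "k = j + 1 + k'" using True j_def by simp
    define A :: "'a word" where "A = replicate k (B2, True) @ concat (replicate m [(B1, True), (B2, True)]) @ replicate j (B1, True)"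
    have eq: "Wi k m @ PT k' @ Z = A @ [(B1, True)] @ replicate k' (B1, True) @ finv (replicate k' (B1, True)) @ ((B2, False) # Z)"
      unfolding Wi_def A_def PT_def finv_rep by (simp add: kj rep3' del: replicate_Suc)
    have r1: "rd (A @ [(B1, True)])" unfolding A_def using rd_neg_snoc[of k m "Suc j"]
      by (simp add: rep_Suc_snoc del: replicate_Suc)
    have r2: "rd ((B2, False) # Z)" using assms(5) rd_suffix[of "replicate k' (B1, False)"] by (simp add: PT_def)
    have "freduce (Wi k m @ PT k' @ Z) = A @ (B1, True) # (B2, False) # Z"
      unfolding eq by (rule cancel_join[OF r1 r2]) simp
    moreover have "A = PF k @ (B2, True) # concat (replicate m0 [(B1, True), (B2, True)]) @ replicate j (B1, True)"
      by (simp add: A_def PF_def m)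
    ultimately have "freduce (Wi k m @ PT k' @ Z) = PF k @ ((B2, True) # concat (replicate m0 [(B1, True), (B2, True)]) @ replicate j (B1, True) @ (B1, True) # (B2, False) # Z)"
      by simp
    then show ?thesis by blast
  next
    case False
    then have lt: "k < k'" using assms(4) by simp
    define j where "j = k' - k"
    have kj: "k' = k + j" using lt j_def by simp
    define X :: "'a word" where "X = replicate k (B2, True) @ concat (replicate m0 [(B1, True), (B2, True)]) @ [(B1, True)]"
    have eq: "Wi k m @ PT k' @ Z = X @ [(B2, True)] @ replicate k (B1, True) @ finv (replicate k (B1, True)) @ (replicate j (B1, False) @ (B2, False) # Z)"
      unfolding Wi_def X_def PT_def finv_rep by (simp add: kj m concat_rep_snoc replicate_add del: replicate_Suc)
    have r1: "rd (X @ [(B2, True)])" unfolding X_def using rd_neg_snoc[of k m 0]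
      by (simp add: m concat_rep_snoc del: replicate_Suc)
    have r2: "rd (replicate j (B1, False) @ (B2, False) # Z)" using assms(5) rd_suffix[of "replicate k (B1, False)"]
      by (simp add: PT_def kj replicate_add)
    have j0: "j \<noteq> 0" using kj lt by simp
    have "freduce (Wi k m @ PT k' @ Z) = X @ (B2, True) # replicate j (B1, False) @ (B2, False) # Z"
      unfolding eq by (rule cancel_join[OF r1 r2]) (use j0 in \<open>cases j; auto\<close>)
    moreover have "X = PF k @ concat (replicate m0 [(B2, True), (B1, True)])"
      by (simp add: X_def PF_def concat_rep_shift)
    ultimately have "freduce (Wi k m @ PT k' @ Z) = PF k @ (concat (replicate m0 [(B2, True), (B1, True)]) @ (B2, True) # replicate j (B1, False) @ (B2, False) # Z)"
      by simp
    then show ?thesis by blast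
  qed
qed




lemma W_prefix: "m \<ge> 1 \<Longrightarrow> \<exists>R. W k m = PT k @ R"
  by (cases m) (auto simp: W_def PT_def)
lemma Wi_prefix: "m \<ge> 1 \<Longrightarrow> \<exists>R. Wi k m = PF k @ R"
  by (cases m) (auto simp: Wi_def PF_def)

lemma rd_Wi: "rd (Wi k m)" using rd_W[of k m] finv_W[of k m] rd_finv by metis
lemma GF_Wi: "GF (Wi k m)" using GF_W[of k m] finv_W[of k m] GF_finv by metis

locale etaloc =
  fixes eta :: "'a::finite gen \<times> 'a \<Rightarrow> nat"
  assumes bij: "bij_betw eta UNIV {1 .. D_const TYPE('a) div 4}"
begin


lemma k_range: "1 \<le> eta x \<and> eta x \<le> D_const TYPE('a) div 4"
  using bij unfolding bij_betw_def by auto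

lemma k_ge1: "eta x \<ge> 1" using k_range by blast

lemma m_ge1: "D_const TYPE('a) - 2 * eta x \<ge> 1"
  using k_range[of x] by linarith

lemma eta_inj: "x \<noteq> y \<Longrightarrow> eta x \<noteq> eta y"
  using bij unfolding bij_betw_def inj_on_def by blast

lemma vword_W: "vword eta b a = W (eta (b, a)) (D_const TYPE('a) - 2 * eta (b, a))"
  by (simp add: vword_def W_def Let_def)

lemma finv_vword: "finv (vword eta b a) = Wi (eta (b, a)) (D_const TYPE('a) - 2 * eta (b, a))"
  by (simp add: vword_W finv_W)

lemma rd_vword: "rd (vword eta b a)" by (simp add: vword_W rd_W)
lemma GF_vword: "GF (vword eta b a)" by (simp add: vword_W GF_W)

definition Phi1 :: "'a \<Rightarrow> 'a letter \<Rightarrow> 'a word" where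
  "Phi1 a x = (if snd x then vword eta (fst x) a else finv (vword eta (fst x) a))"

definition phi :: "'a \<Rightarrow> 'a word \<Rightarrow> 'a word" where
  "phi a g = concat (map (Phi1 a) g)"

definition Pp :: "'a \<Rightarrow> 'a letter \<Rightarrow> 'a word" where
  "Pp a x = (if snd x then PT (eta (fst x, a)) else PF (eta (fst x, a)))"

lemma phi_Nil[simp]: "phi a [] = []" by (simp add: phi_def)
lemma phi_Cons: "phi a (x # g) = Phi1 a x @ phi a g" by (simp add: phi_def)
lemma phi_snoc: "phi a (g @ [x]) = phi a g @ Phi1 a x" by (simp add: phi_def)

lemma rd_Phi1: "rd (Phi1 a x)" by (simp add: Phi1_def rd_vword rd_finv)

lemma JL:
  assumes "x' \<noteq> inv_letter x" "rd (Pp a x' @ Z)"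
  shows "\<exists>Z'. freduce (Phi1 a x @ Pp a x' @ Z) = Pp a x @ Z'"
proof -
  obtain b e where x: "x = (b, e)" by fastforce
  obtain b' e' where x': "x' = (b', e')" by fastforce
  note k1 = k_ge1[of "(b, a)"] and k2 = k_ge1[of "(b', a)"] and m1 = m_ge1[of "(b, a)"]
  show ?thesis
  proof (cases e)
    case True
    show ?thesis
    proof (cases e')
      case True
      then show ?thesis using \<open>e\<close> JL_TT[OF k1 k2 m1, of Z] assms(2) x x'
        by (simp add: Phi1_def Pp_def vword_W)
    next
      case False
      have "b \<noteq> b'" using assms(1) x x' \<open>e\<close> False by auto
      then have "eta (b, a) \<noteq> eta (b', a)" using eta_inj by simp
      then show ?thesis using \<open>e\<close> False JL_TF[OF k1 k2 m1, of Z] assms(2) x x'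
        by (simp add: Phi1_def Pp_def vword_W)
    qed
  next
    case False
    show ?thesis
    proof (cases e')
      case True
      have "b \<noteq> b'" using assms(1) x x' \<open>\<not> e\<close> True by auto
      then have "eta (b, a) \<noteq> eta (b', a)" using eta_inj by simp
      then show ?thesis using \<open>\<not> e\<close> True JL_FT[OF k1 k2 m1, of Z] assms(2) x x'
        by (simp add: Phi1_def Pp_def finv_vword)
    next
      case False
      then show ?thesis using \<open>\<not> e\<close> JL_FF[OF k1 k2 m1, of Z] assms(2) x x'
        by (simp add: Phi1_def Pp_def finv_vword)
    qed
  qed
qed

lemma FL: "rd g \<Longrightarrow> g \<noteq> [] \<Longrightarrow> \<exists>Z. freduce (phi a g) = Pp a (hd g) @ Z"
proof (induction g)
  case Nil then show ?case by simp
next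
  case (Cons x g)
  show ?case
  proof (cases g)
    case Nil
    have "freduce (phi a [x]) = Phi1 a x" using rd_Phi1 by (simp add: phi_def freduce_id)
    moreover have "\<exists>R. Phi1 a x = Pp a x @ R"
      using W_prefix[OF m_ge1[of "(fst x, a)"]] Wi_prefix[OF m_ge1[of "(fst x, a)"]]
      by (simp add: Phi1_def Pp_def vword_W finv_W) blast
    ultimately show ?thesis using Nil by auto
  next
    case (Cons x' g'')
    have rg: "rd g" using Cons.prems rd_Cons by blast
    have ne: "x' \<noteq> inv_letter x" using Cons.prems Cons by simp
    from Cons.IH[OF rg] Cons obtain Z where Z: "freduce (phi a g) = Pp a x' @ Z" by auto
    have rZ: "rd (Pp a x' @ Z)" using Z freduce_rd by metis
    have "freduce (phi a (x # g)) = freduce (Phi1 a x @ freduce (phi a g))"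
      by (simp add: phi_Cons freduce_append_right[symmetric])
    also have "\<dots> = freduce (Phi1 a x @ Pp a x' @ Z)" using Z by simp
    finally show ?thesis using JL[OF ne rZ] by auto
  qed
qed

lemma freduce_finv_left: "freduce (finv P @ Y) = freduce (finv (freduce P) @ Y)"
proof -
  have "freduce (finv P @ Y) = freduce (finv P @ freduce P @ finv (freduce P) @ Y)"
    using freduce_cancel_mid[of "finv P" "freduce P" Y] by simp
  also have "\<dots> = freduce (finv P @ P @ finv (freduce P) @ Y)" by (simp add: freduce_mid)
  also have "\<dots> = freduce (finv (freduce P) @ Y)" using freduce_cancel_mid'[of "[]" P] by simp
  finally show ?thesis .
qed

lemma lemmaF:
  assumes "rd g" "GF g" "g \<noteq> []"
  shows "freduce (finv (phi a g) @ g) \<noteq> []"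
proof -
  obtain Z where Z: "freduce (phi a g) = Pp a (hd g) @ Z" using FL[OF assms(1,3)] by blast
  obtain b e where hg: "hd g = (b, e)" by fastforce
  have hX: "hd (freduce (phi a g)) = (if e then (B1, False) else (B2, True))"
    using Z hg k_ge1[of "(b, a)"] by (cases "eta (b, a)") (auto simp: Pp_def PT_def PF_def)
  have bB: "b = B1 \<or> b = B2" using assms(2,3) hg by (cases g) auto
  have neq: "hd g \<noteq> hd (freduce (phi a g))" using hX hg bB by auto
  have nX: "freduce (phi a g) \<noteq> []" using Z hg k_ge1[of "(b, a)"] by (auto simp: Pp_def PT_def PF_def)
  have lst: "last (finv (freduce (phi a g))) = inv_letter (hd (freduce (phi a g)))"
    using nX by (cases "freduce (phi a g)") auto
  have "rd (finv (freduce (phi a g)) @ g)"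
    using rd_append[of "finv (freduce (phi a g))" g] assms(1) freduce_rd rd_finv lst neq by auto
  then have "freduce (finv (phi a g) @ g) = finv (freduce (phi a g)) @ g"
    by (simp add: freduce_finv_left[of "phi a g"] freduce_id)
  then show ?thesis using assms(3) by simp
qed

end




lemma ar_T: "apply_rule eta x (y, True) = freduce (psi eta y x @ [(y, True)])"
  by (simp add: apply_rule_def fmult_def u_word_def)
lemma ar_F: "apply_rule eta x (y, False) = psi_inv eta y (freduce (x @ [(y, False)]))"
  by (simp add: apply_rule_def fmult_def u_word_def)

lemma rd_snoc: "rd x \<Longrightarrow> (x = [] \<or> last x \<noteq> inv_letter l) \<Longrightarrow> rd (x @ [l])"
  using rd_append[of x "[l]"] by (auto simp: inv_eq_iff)

lemma rd_GF_snoc: "rd x \<Longrightarrow> GF x \<Longrightarrow> rd (x @ [(G c, e)])"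
  apply (rule rd_snoc, assumption)
  by (cases x rule: rev_cases) (auto simp: inv_letter_def)

lemma run_Nil[simp]: "run eta x [] = x" by (simp add: run_def)
lemma run_Cons[simp]: "run eta x (r # h) = run eta (apply_rule eta x r) h" by (simp add: run_def)

context etaloc
begin

lemma psi_B:
  assumes "rd (z0 @ [(G a, e)] @ s)" "GF s"
  shows "\<exists>Q. psi eta y (z0 @ [(G a, e)] @ s) = Q @ [(G a, e)] @ freduce ((if e then finv (vword eta y a) else []) @ s) \<and> rd (Q @ [(G a, e)])"
proof -
  interpret homloc "\<lambda>a. vword eta y a @ [(G a, False)]" "\<lambda>a. vword eta y a"
    by unfold_locales (simp_all add: GF_vword rd_vword)
  show ?thesis using homB[OF assms] by (simp add: psi_def T_def)
qed

lemma psiinv_B: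
  assumes "rd (z0 @ [(G a, e)] @ s)" "GF s"
  shows "\<exists>Q. psi_inv eta y (z0 @ [(G a, e)] @ s) = Q @ [(G a, e)] @ freduce ((if e then vword eta y a else []) @ s) \<and> rd (Q @ [(G a, e)])"
proof -
  interpret homloc "\<lambda>a. finv (vword eta y a) @ [(G a, False)]" "\<lambda>a. finv (vword eta y a)"
    by unfold_locales (simp_all add: GF_vword rd_vword GF_finv rd_finv)
  show ?thesis using homB[OF assms] by (cases e) (simp_all add: psi_inv_def T_def)
qed

lemma psi_GF: "GF x \<Longrightarrow> psi eta y x = freduce x"
  by (simp add: psi_def hom_ext_B)
lemma psiinv_GF: "GF x \<Longrightarrow> psi_inv eta y x = freduce x"
  by (simp add: psi_inv_def hom_ext_B)

lemma GF_phi: "GF (phi a g)"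
  by (induction g) (auto simp: phi_Cons Phi1_def GF_vword GF_finv)

definition INVA :: "'a word \<Rightarrow> 'a letter \<Rightarrow> bool" where
  "INVA x r \<longleftrightarrow> rd x \<and> x \<noteq> [] \<and> last x = r \<and> (GF x \<or> (\<exists>z0 a s. x = z0 @ [(G a, False)] @ s \<and> GF s))"

definition INVB :: "'a word \<Rightarrow> 'a letter \<Rightarrow> bool" where
  "INVB x r \<longleftrightarrow> (\<exists>z0 a g. x = z0 @ [(G a, True)] @ freduce (finv (phi a g) @ g) \<and> rd (z0 @ [(G a, True)])
      \<and> GF g \<and> rd g \<and> (g = [] \<longrightarrow> r = (G a, True)) \<and> (g \<noteq> [] \<longrightarrow> last g = r))"

definition INV :: "'a word \<Rightarrow> 'a letter \<Rightarrow> bool" where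
  "INV x r \<longleftrightarrow> INVA x r \<or> INVB x r"

lemma INV_ne: "INV x r \<Longrightarrow> x \<noteq> []"
  unfolding INV_def INVA_def INVB_def by auto

lemma INVA_pos: "rd (Q @ [(G c, False)] @ s) \<Longrightarrow> GF s \<Longrightarrow> last (Q @ [(G c, False)] @ s) = r \<Longrightarrow> INV (Q @ [(G c, False)] @ s) r"
  unfolding INV_def INVA_def by blast

lemma INVA_GF: "rd x \<Longrightarrow> GF x \<Longrightarrow> x \<noteq> [] \<Longrightarrow> last x = r \<Longrightarrow> INV x r"
  unfolding INV_def INVA_def by blast

lemma INVB_intro: "rd (z0 @ [(G a, True)]) \<Longrightarrow> GF g \<Longrightarrow> rd g \<Longrightarrow> (g = [] \<longrightarrow> r = (G a, True)) \<Longrightarrow> (g \<noteq> [] \<longrightarrow> last g = r)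
   \<Longrightarrow> INV (z0 @ [(G a, True)] @ freduce (finv (phi a g) @ g)) r"
  unfolding INV_def INVB_def by blast

lemma INVB_intro0: "rd (z0 @ [(G a, True)]) \<Longrightarrow> INV (z0 @ [(G a, True)]) (G a, True)"
  using INVB_intro[of z0 a "[]" "(G a, True)"] by simp

lemma stepA_B:
  assumes rx: "rd x" and form: "GF x \<or> (\<exists>z0 a s. x = z0 @ [(G a, False)] @ s \<and> GF s)"
    and lx: "x = [] \<or> last x \<noteq> inv_letter r'" and yB: "fst r' = B1 \<or> fst r' = B2"
  shows "INV (apply_rule eta x r') r'"
proof -
  obtain y \<epsilon> where r': "r' = (y, \<epsilon>)" by fastforce
  have rxl: "rd (x @ [r'])" using rd_snoc[OF rx lx] .
  have gr: "GF [r']" using yB by simp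
  show ?thesis
  proof (cases \<epsilon>)
    case True
    from form show ?thesis
    proof
      assume gx: "GF x"
      have "apply_rule eta x r' = x @ [r']"
        using r' True psi_GF[OF gx] freduce_id[OF rx] freduce_id[OF rxl] by (simp add: ar_T)
      then show ?thesis using INVA_GF[OF rxl] gx gr by simp
    next
      assume "\<exists>z0 a s. x = z0 @ [(G a, False)] @ s \<and> GF s"
      then obtain z0 a s where x: "x = z0 @ [(G a, False)] @ s" and gs: "GF s" by blast
      have rs: "rd s" using rx x rd_append[of "z0 @ [(G a, False)]" s] by simp
      obtain Q where Q: "psi eta y x = Q @ [(G a, False)] @ s" "rd (Q @ [(G a, False)])"
        using psi_B[of z0 a False s y] rx x gs freduce_id[OF rs] by auto
      have rQs: "rd (Q @ [(G a, False)] @ s)" using rd_G_block[OF Q(2) gs rs] by simp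
      have r2: "rd (Q @ [(G a, False)] @ s @ [r'])"
      proof (cases "s = []")
        case True
        then show ?thesis using rd_G_block[OF Q(2) gr] by simp
      next
        case False
        then have "last (Q @ [(G a, False)] @ s) = last x" using x by simp
        then show ?thesis using rd_snoc[OF rQs, of r'] lx x False by auto
      qed
      have "apply_rule eta x r' = Q @ [(G a, False)] @ (s @ [r'])"
        using r' True Q(1) r2 by (simp add: ar_T freduce_id)
      then show ?thesis using INVA_pos[of Q a "s @ [r']" r'] r2 gs gr by simp
    qed
  next
    case False
    have fx: "freduce (x @ [r']) = x @ [r']" using freduce_id[OF rxl] .
    from form show ?thesis
    proof
      assume gx: "GF x"
      have "apply_rule eta x r' = x @ [r']"
        using r' False psiinv_GF[of "x @ [r']" y] gx gr fx by (simp add: ar_F)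
      then show ?thesis using INVA_GF[OF rxl] gx gr by simp
    next
      assume "\<exists>z0 a s. x = z0 @ [(G a, False)] @ s \<and> GF s"
      then obtain z0 a s where x: "x = z0 @ [(G a, False)] @ s" and gs: "GF s" by blast
      have rxl2: "rd (z0 @ [(G a, False)] @ (s @ [r']))" using rxl x by simp
      have rs: "rd (s @ [r'])" using rxl2 rd_append[of "z0 @ [(G a, False)]" "s @ [r']"] by simp
      obtain Q where Q: "psi_inv eta y (z0 @ [(G a, False)] @ (s @ [r'])) = Q @ [(G a, False)] @ (s @ [r'])" "rd (Q @ [(G a, False)])"
        using psiinv_B[OF rxl2, of y] gs gr freduce_id[OF rs] by auto
      have r2: "rd (Q @ [(G a, False)] @ (s @ [r']))" using rd_G_block[OF Q(2) _ rs] gs gr by simp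
      have "apply_rule eta x r' = Q @ [(G a, False)] @ (s @ [r'])"
        using r' False Q(1) fx x by (simp add: ar_F)
      then show ?thesis using INVA_pos[of Q a "s @ [r']" r'] r2 gs gr by simp
    qed
  qed
qed

lemma stepA:
  assumes rx: "rd x" and form: "GF x \<or> (\<exists>z0 a s. x = z0 @ [(G a, False)] @ s \<and> GF s)"
    and lx: "x = [] \<or> last x \<noteq> inv_letter r'"
  shows "INV (apply_rule eta x r') r'"
proof -
  obtain y \<epsilon> where r': "r' = (y, \<epsilon>)" by fastforce
  have rxl: "rd (x @ [r'])" using rd_snoc[OF rx lx] .
  show ?thesis
  proof (cases y)
    case (G c)
    show ?thesis
    proof (cases \<epsilon>)
      case True
      from form show ?thesis
      proof
        assume gx: "GF x"
        have ar: "apply_rule eta x r' = x @ [(G c, True)]"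
          using r' G True psi_GF[OF gx] freduce_id[OF rx] rd_GF_snoc[OF rx gx, of c True]
          by (simp add: ar_T freduce_id)
        show ?thesis using ar INVB_intro0[OF rd_GF_snoc[OF rx gx, of c True]] r' G True by simp
      next
        assume "\<exists>z0 a s. x = z0 @ [(G a, False)] @ s \<and> GF s"
        then obtain z0 a s where x: "x = z0 @ [(G a, False)] @ s" and gs: "GF s" by blast
        have rs: "rd s" using rx x rd_append[of "z0 @ [(G a, False)]" s] by simp
        obtain Q where Q: "psi eta (G c) x = Q @ [(G a, False)] @ s" "rd (Q @ [(G a, False)])"
          using psi_B[of z0 a False s "G c"] rx x gs freduce_id[OF rs] by auto
        have rQs: "rd (Q @ [(G a, False)] @ s)" using rd_G_block[OF Q(2) gs rs] by simp
        have r2: "rd (Q @ [(G a, False)] @ s @ [(G c, True)])"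
        proof (cases "s = []")
          case True
          then have "(a, False) \<noteq> (c, \<not> True)" using lx x r' G \<open>\<epsilon>\<close> by auto
          then show ?thesis using snoc_GG[OF Q(2)] True by simp
        next
          case False
          then show ?thesis using snoc_G[of "Q @ [(G a, False)]" s] rQs gs by simp
        qed
        have ar: "apply_rule eta x r' = (Q @ [(G a, False)] @ s) @ [(G c, True)]"
          using r' G True Q(1) r2 by (simp add: ar_T freduce_id)
        show ?thesis using ar INVB_intro0[of "Q @ [(G a, False)] @ s" c] r2 r' G True by simp
      qed
    next
      case False
      have rxl': "rd (x @ [(G c, False)])" using rxl r' G False by simp
      obtain Q where Q: "psi_inv eta (G c) (x @ [(G c, False)] @ []) = Q @ [(G c, False)] @ freduce ([] @ [])" "rd (Q @ [(G c, False)])"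
        using psiinv_B[of x c False "[]" "G c"] rxl' by auto
      have "apply_rule eta x r' = Q @ [(G c, False)]"
        using Q(1) r' G False freduce_id[OF rxl'] by (simp add: ar_F)
      then show ?thesis using INVA_pos[of Q c "[]" r'] Q(2) r' G False by simp
    qed
  next
    case B1
    then show ?thesis using stepA_B[OF rx form lx] r' by simp
  next
    case B2
    then show ?thesis using stepA_B[OF rx form lx] r' by simp
  qed
qed


lemma stepB:
  assumes inv: "INVB x r" and nr: "r' \<noteq> inv_letter r"
  shows "INV (apply_rule eta x r') r'"
proof -
  from inv obtain z0 a g where x: "x = z0 @ [(G a, True)] @ freduce (finv (phi a g) @ g)"
    and rz: "rd (z0 @ [(G a, True)])" and gg: "GF g" and rg: "rd g"
    and g0: "g = [] \<longrightarrow> r = (G a, True)" and g1: "g \<noteq> [] \<longrightarrow> last g = r"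
    unfolding INVB_def by blast
  define s where "s = freduce (finv (phi a g) @ g)"
  have gs: "GF s" unfolding s_def by (intro GF_freduce) (simp add: GF_finv GF_phi gg)
  have rs: "rd s" unfolding s_def by (rule freduce_rd)
  have x': "x = z0 @ [(G a, True)] @ s" using x s_def by simp
  have rx: "rd x" using rd_G_block[OF rz gs rs] x' by simp
  have nr': "r \<noteq> inv_letter r'" using nr by (auto simp: inv_eq_iff)
  obtain y \<epsilon> where r': "r' = (y, \<epsilon>)" by fastforce
  show ?thesis
  proof (cases "\<exists>c. y = G c")
    case True
    then obtain c where yc: "y = G c" by blast
    show ?thesis
    proof (cases \<epsilon>)
      case True
      define M where "M = freduce (finv (vword eta (G c) a) @ s)"
      obtain Q where Q: "psi eta (G c) x = Q @ [(G a, True)] @ M" "rd (Q @ [(G a, True)])"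
        using psi_B[of z0 a True s "G c"] rx x' gs M_def by auto
      have gM: "GF M" unfolding M_def by (intro GF_freduce) (simp add: GF_finv GF_vword gs)
      have rM: "rd M" unfolding M_def by (rule freduce_rd)
      have rQM: "rd (Q @ [(G a, True)] @ M)" using rd_G_block[OF Q(2) gM rM] by simp
      have r2: "rd ((Q @ [(G a, True)] @ M) @ [(G c, True)])"
      proof (cases "M = []")
        case True
        then show ?thesis using snoc_GG[OF Q(2), of c True] by simp
      next
        case False
        then show ?thesis using snoc_G[of "Q @ [(G a, True)]" M c True] rQM gM by simp
      qed
      have "apply_rule eta x r' = (Q @ [(G a, True)] @ M) @ [(G c, True)]"
        using r' yc True Q(1) r2 by (simp add: ar_T freduce_id)
      then show ?thesis using INVB_intro0[OF r2] r' yc True by simp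
    next
      case False
      have lx: "last x \<noteq> (G c, True)"
      proof (cases "g = []")
        case True
        then have "s = []" using s_def by simp
        then show ?thesis using x' g0 True nr r' yc False by auto
      next
        case False
        then have "s \<noteq> []" using lemmaF[OF rg gg False] s_def by simp
        then have "fst (last x) = B1 \<or> fst (last x) = B2" using x' gs
          by (cases s rule: rev_cases) (auto simp: GF_def)
        then show ?thesis by auto
      qed
      have rxl: "rd (x @ [(G c, False)])" using rd_snoc[OF rx, of "(G c, False)"] lx x' by auto
      obtain Q where Q: "psi_inv eta (G c) (x @ [(G c, False)] @ []) = Q @ [(G c, False)] @ freduce ([] @ [])" "rd (Q @ [(G c, False)])"
        using psiinv_B[of x c False "[]" "G c"] rxl by auto
      have "apply_rule eta x r' = Q @ [(G c, False)]"
        using Q(1) r' yc False freduce_id[OF rxl] by (simp add: ar_F)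
      then show ?thesis using INVA_pos[of Q c "[]" r'] Q(2) r' yc False by simp
    qed
  next
    case False
    then have yB: "y = B1 \<or> y = B2" by (cases y) auto
    have gr: "GF [r']" using yB r' by simp
    have rg': "rd (g @ [r'])" using rd_snoc[OF rg, of r'] g1 nr' by auto
    have gg': "GF (g @ [r'])" using gg gr by simp
    show ?thesis
    proof (cases \<epsilon>)
      case True
      define M where "M = freduce (finv (vword eta y a) @ s)"
      obtain Q where Q: "psi eta y x = Q @ [(G a, True)] @ M" "rd (Q @ [(G a, True)])"
        using psi_B[of z0 a True s y] rx x' gs M_def by auto
      have phi': "phi a (g @ [r']) = phi a g @ vword eta y a" using r' True by (simp add: phi_snoc Phi1_def)
      have eqM: "freduce (M @ [r']) = freduce (finv (phi a (g @ [r'])) @ (g @ [r']))"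
        unfolding M_def s_def phi' by (simp add: freduce_append_left freduce_mid)
      have gM: "GF M" unfolding M_def by (intro GF_freduce) (simp add: GF_finv GF_vword gs)
      have gMr: "GF (freduce (M @ [r']))" by (intro GF_freduce) (use gM gr in simp)
      have rr: "rd (Q @ [(G a, True)] @ freduce (M @ [r']))"
        using rd_G_block[OF Q(2) gMr freduce_rd] by simp
      have "apply_rule eta x r' = freduce (Q @ [(G a, True)] @ M @ [r'])"
        using r' True Q(1) by (simp add: ar_T)
      also have "\<dots> = freduce (Q @ [(G a, True)] @ freduce (M @ [r']))"
        using freduce_append_right[of "Q @ [(G a, True)]" "M @ [r']"] by simp
      also have "\<dots> = Q @ [(G a, True)] @ freduce (M @ [r'])" using rr by (simp add: freduce_id)
      finally have ar: "apply_rule eta x r' = Q @ [(G a, True)] @ freduce (finv (phi a (g @ [r'])) @ (g @ [r']))"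
        using eqM by simp
      show ?thesis unfolding ar by (rule INVB_intro[OF Q(2) gg' rg']) simp_all
    next
      case False
      define s' where "s' = freduce (s @ [r'])"
      have gs': "GF s'" unfolding s'_def by (intro GF_freduce) (use gs gr in simp)
      have rs': "rd s'" unfolding s'_def by (rule freduce_rd)
      have rxs: "rd (z0 @ [(G a, True)] @ s')" using rd_G_block[OF rz gs' rs'] by simp
      have fx: "freduce (x @ [r']) = z0 @ [(G a, True)] @ s'"
      proof -
        have "freduce (x @ [r']) = freduce (z0 @ [(G a, True)] @ s')"
          unfolding x' s'_def using freduce_append_right[of "z0 @ [(G a, True)]" "s @ [r']"] by simp
        then show ?thesis using rxs by (simp add: freduce_id)
      qed
      obtain Q where Q: "psi_inv eta y (z0 @ [(G a, True)] @ s') = Q @ [(G a, True)] @ freduce (vword eta y a @ s')" "rd (Q @ [(G a, True)])"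
        using psiinv_B[OF rxs gs', of y] by auto
      have phi': "phi a (g @ [r']) = phi a g @ finv (vword eta y a)" using r' False by (simp add: phi_snoc Phi1_def)
      have eq2: "freduce (vword eta y a @ s') = freduce (finv (phi a (g @ [r'])) @ (g @ [r']))"
        unfolding s'_def s_def phi' by (simp add: freduce_append_right[symmetric] freduce_mid)
      have ar: "apply_rule eta x r' = Q @ [(G a, True)] @ freduce (finv (phi a (g @ [r'])) @ (g @ [r']))"
        using r' False fx Q(1) eq2 by (simp add: ar_F)
      show ?thesis unfolding ar by (rule INVB_intro[OF Q(2) gg' rg']) simp_all
    qed
  qed
qed

lemma step:
  assumes "INV x r" "r' \<noteq> inv_letter r"
  shows "INV (apply_rule eta x r') r'"
proof -
  from assms(1) show ?thesis unfolding INV_def[of x r]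
  proof
    assume "INVA x r"
    then have rx: "rd x" and form: "GF x \<or> (\<exists>z0 a s. x = z0 @ [(G a, False)] @ s \<and> GF s)"
      and lx: "last x = r" unfolding INVA_def by blast+
    have "x = [] \<or> last x \<noteq> inv_letter r'" using lx assms(2) by (auto simp: inv_eq_iff)
    then show ?thesis using stepA[OF rx form] by blast
  next
    assume "INVB x r"
    then show ?thesis using stepB assms(2) by blast
  qed
qed

lemma no_return: "INV x r \<Longrightarrow> rd (r # h) \<Longrightarrow> run eta x h \<noteq> []"
proof (induction h arbitrary: x r)
  case Nil then show ?case using INV_ne by simp
next
  case (Cons r' h)
  have "r' \<noteq> inv_letter r" "rd (r' # h)" using Cons.prems(2) by auto
  then show ?case using Cons.IH[OF step[OF Cons.prems(1)]] by simp
qed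

lemma removal:
  assumes "rd (p @ [l])" "GF (p @ [l])"
  shows "apply_rule eta (p @ [l]) (inv_letter l) = p"
proof -
  obtain b e where l: "l = (b, e)" by fastforce
  have rp: "rd p" using assms(1) rd_append by blast
  have gp: "GF (p @ [l])" using assms(2) .
  show ?thesis
  proof (cases e)
    case False
    have "apply_rule eta (p @ [l]) (inv_letter l) = freduce (psi eta b (p @ [l]) @ [(b, True)])"
      using l False by (simp add: ar_T)
    also have "\<dots> = freduce (p @ [l] @ finv [l] @ [])"
      using psi_GF[OF gp] freduce_id[OF assms(1)] l False by simp
    also have "\<dots> = p" using freduce_cancel_mid[of p "[l]" "[]"] freduce_id[OF rp] by simp
    finally show ?thesis .
  next
    case True
    have "apply_rule eta (p @ [l]) (inv_letter l) = psi_inv eta b (freduce (p @ [l] @ finv [l] @ []))"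
      using l True by (simp add: ar_F)
    also have "\<dots> = psi_inv eta b p" using freduce_cancel_mid[of p "[l]" "[]"] freduce_id[OF rp] by simp
    also have "\<dots> = p" using psiinv_GF[of p b] gp freduce_id[OF rp] by simp
    finally show ?thesis .
  qed
qed

lemma exist: "rd p \<Longrightarrow> GF p \<Longrightarrow> run eta p (finv p) = []"
proof (induction p rule: rev_induct)
  case Nil then show ?case by simp
next
  case (snoc l p)
  have "rd p" "GF p" using snoc.prems rd_append by auto
  then show ?case using snoc.IH removal[OF snoc.prems] by simp
qed

lemma uniq: "rd p \<Longrightarrow> GF p \<Longrightarrow> rd h \<Longrightarrow> run eta p h = [] \<Longrightarrow> h = finv p"
proof (induction h arbitrary: p)
  case Nil then show ?case by simp
next
  case (Cons r h)
  show ?case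
  proof (cases "p \<noteq> [] \<and> r = inv_letter (last p)")
    case True
    then obtain p' l where p: "p = p' @ [l]" and rl: "r = inv_letter l"
      by (metis append_butlast_last_id)
    have "rd p'" "GF p'" using Cons.prems p rd_append by auto
    moreover have "rd h" using Cons.prems(3) rd_Cons by blast
    moreover have "run eta p' h = []" using Cons.prems(4) p rl removal[of p' l] Cons.prems(1,2) by simp
    ultimately have "h = finv p'" using Cons.IH by blast
    then show ?thesis using p rl by simp
  next
    case False
    then have "p = [] \<or> last p \<noteq> inv_letter r" by (auto simp: inv_eq_iff)
    then have "INV (apply_rule eta p r) r" using stepA[OF Cons.prems(1)] Cons.prems(2) by blast
    then have "run eta (apply_rule eta p r) h \<noteq> []" using no_return Cons.prems(3) by blast
    then show ?thesis using Cons.prems(4) by simp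
  qed
qed

end

theorem lemma5p11:
  fixes eta :: "'a::finite gen \<times> 'a \<Rightarrow> nat"
    and w :: "'a word"
  assumes eta_bij: "bij_betw eta UNIV {1 .. D_const TYPE('a) div 4}"
    and w_FB: "in_FB w"
  shows "(\<exists>!h. reduced_history h \<and> run eta w h = [])
       \<and> (\<forall>h. reduced_history h \<and> run eta w h = [] \<longrightarrow> length h = length w)"
proof -
  interpret etaloc eta by unfold_locales (rule eta_bij)
  have rw: "rd w" using w_FB by (simp add: in_FB_def reduced_word_rd)
  have gw: "GF w" using w_FB by (auto simp: in_FB_def GF_def)
  have u: "\<And>h. reduced_history h \<and> run eta w h = [] \<Longrightarrow> h = finv w"
    using uniq[OF rw gw] by (simp add: reduced_history_rd)
  have e: "reduced_history (finv w) \<and> run eta w (finv w) = []"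
    using exist[OF rw gw] rw by (simp add: reduced_history_rd rd_finv)
  show ?thesis
  proof
    show "\<exists>!h. reduced_history h \<and> run eta w h = []" using u e by blast
    show "\<forall>h. reduced_history h \<and> run eta w h = [] \<longrightarrow> length h = length w"
    proof (intro allI impI)
      fix h assume "reduced_history h \<and> run eta w h = []"
      then have "h = finv w" by (rule u)
      then show "length h = length w" by simp
    qed
  qed
qed



end
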